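(* Let $L$ be a precompact Hausdorff co-Heyting algebra, let $x\in\mathcal I^{!\wedge}(L)$, and let $r$ be the cofoundation rank of $x$ in the ordered set $\mathcal I^{!\wedge}(L)$. Then $\dim_{L^*}x^*=r=\operatorname{codim}_L x^{\vee}$, where $x^\vee=\bigwedge\{y\in L: y\not\le x\}$.
   Context: A co-Heyting algebra is a bounded distributive lattice $(L,0,1,\vee,\wedge)$ such that $a-b=\min\{c\in L: a\le b\vee c\}$ exists for all $a,b$. For an ideal $I$, $L/I$ is the quotient by $a\equiv_I b\iff(a-b)\vee(b-a)\in I$. For a bounded distributive lattice $M$: $\operatorname{Spec}M$ is its set of prime filters ordered by inclusion; height/coheight of a prime filter are its foundation rank and its foundation rank for the reverse order in $\operatorname{Spec}M$; $\operatorname{codim}_M a=\min\{\operatorname{height}\mathfrak p: a\in\mathfrak p\}$ ($+\infty$ if none) and $\dim_M a=\sup\{\operatorname{coheight}\mathfrak p: a\in\mathfrak p\}$ ($-\infty$ if none). $L^*$ is $L$ with the reverse order (a bounded distributive lattice), and $x^*$ is $x$ viewed as an element of $L^*$. $dL=\{a:\operatorname{codim}_La\ge d\}$. $L$ is Hausdorff if every nonzero element has finite codimension; precompact if $L/dL$ is finite for every positive integer $d$. $\mathcal I^{!\wedge}(L)$ is the set of completely meet irreducible elements: $x\ne1$ such that $\bigwedge A\le x$ implies $a\le x$ for some $a\in A$. Cofoundation rank in an ordered set is foundation rank for the reverse order. *)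

theory Defs
  imports Main "HOL-Library.Dual_Ordered_Lattice" "HOL-Library.Extended_Real"
begin

text \<open>The foundation rank is reported in enat:
  a finite value n means rank exactly n; \<infinity> means rank \<ge> \<omega> (or undefined).\<close>

fun rank_level :: "'b set \<Rightarrow> ('b \<Rightarrow> 'b \<Rightarrow> bool) \<Rightarrow> nat \<Rightarrow> 'b set" where
  "rank_level S lt 0 = {}"
| "rank_level S lt (Suc n) = {p \<in> S. \<forall>q \<in> S. lt q p \<longrightarrow> q \<in> rank_level S lt n}"

definition found_rank :: "'b set \<Rightarrow> ('b \<Rightarrow> 'b \<Rightarrow> bool) \<Rightarrow> 'b \<Rightarrow> enat" where
  "found_rank S lt p =
     (if \<exists>n. p \<in> rank_level S lt (Suc n)
      then enat (LEAST n. p \<in> rank_level S lt (Suc n)) else \<infinity>)"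

definition cofound_rank :: "'b set \<Rightarrow> ('b \<Rightarrow> 'b \<Rightarrow> bool) \<Rightarrow> 'b \<Rightarrow> enat" where
  "cofound_rank S lt p = found_rank S (\<lambda>a b. lt b a) p"

definition prime_filter :: "'a::{bounded_lattice,distrib_lattice} set \<Rightarrow> bool" where
  "prime_filter F \<longleftrightarrow>
     top \<in> F \<and> bot \<notin> F \<and>
     (\<forall>a b. a \<in> F \<longrightarrow> a \<le> b \<longrightarrow> b \<in> F) \<and>
     (\<forall>a b. a \<in> F \<longrightarrow> b \<in> F \<longrightarrow> inf a b \<in> F) \<and>
     (\<forall>a b. sup a b \<in> F \<longrightarrow> a \<in> F \<or> b \<in> F)"

definition Spec :: "'a::{bounded_lattice,distrib_lattice} itself \<Rightarrow> 'a set set" where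
  "Spec _ = {F. prime_filter F}"

definition height :: "'a::{bounded_lattice,distrib_lattice} set \<Rightarrow> enat" where
  "height p = found_rank (Spec TYPE('a)) (\<subset>) p"

definition coheight :: "'a::{bounded_lattice,distrib_lattice} set \<Rightarrow> enat" where
  "coheight p = cofound_rank (Spec TYPE('a)) (\<subset>) p"

definition codim :: "'a::{bounded_lattice,distrib_lattice} \<Rightarrow> enat" where
  "codim a = (INF p \<in> {p \<in> Spec TYPE('a). a \<in> p}. height p)"

definition lat_dim :: "'a::{bounded_lattice,distrib_lattice} \<Rightarrow> ereal" where
  "lat_dim a = (if {p \<in> Spec TYPE('a). a \<in> p} = {} then -\<infinity>
            else (SUP p \<in> {p \<in> Spec TYPE('a). a \<in> p}. ereal_of_enat (coheight p)))"

definition co_heyting :: "'a::{bounded_lattice,distrib_lattice} itself \<Rightarrow> bool" where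
  "co_heyting _ \<longleftrightarrow> (\<forall>a b::'a. \<exists>c. a \<le> sup b c \<and> (\<forall>c'. a \<le> sup b c' \<longrightarrow> c \<le> c'))"

definition cdiff :: "'a::{bounded_lattice,distrib_lattice} \<Rightarrow> 'a \<Rightarrow> 'a" where
  "cdiff a b = (THE c. a \<le> sup b c \<and> (\<forall>c'. a \<le> sup b c' \<longrightarrow> c \<le> c'))"

definition quot_rel :: "'a::{bounded_lattice,distrib_lattice} set \<Rightarrow> ('a \<times> 'a) set" where
  "quot_rel I = {(a, b). sup (cdiff a b) (cdiff b a) \<in> I}"

definition codim_ideal :: "nat \<Rightarrow> 'a::{bounded_lattice,distrib_lattice} set" where
  "codim_ideal d = {a. codim a \<ge> enat d}"

definition hausdorff :: "'a::{bounded_lattice,distrib_lattice} itself \<Rightarrow> bool" where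
  "hausdorff _ \<longleftrightarrow> (\<forall>a::'a. a \<noteq> bot \<longrightarrow> codim a \<noteq> \<infinity>)"

definition precompact :: "'a::{bounded_lattice,distrib_lattice} itself \<Rightarrow> bool" where
  "precompact _ \<longleftrightarrow>
     (\<forall>d::nat. d > 0 \<longrightarrow> finite ((UNIV::'a set) // quot_rel (codim_ideal d :: 'a set)))"

definition is_glb :: "'a::order set \<Rightarrow> 'a \<Rightarrow> bool" where
  "is_glb A m \<longleftrightarrow> (\<forall>a\<in>A. m \<le> a) \<and> (\<forall>m'. (\<forall>a\<in>A. m' \<le> a) \<longrightarrow> m' \<le> m)"

definition cmi :: "'a::{bounded_lattice,distrib_lattice} set" where
  "cmi = {x. x \<noteq> top \<and> (\<forall>A m. is_glb A m \<longrightarrow> m \<le> x \<longrightarrow> (\<exists>a\<in>A. a \<le> x))}"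

definition vee :: "'a::{bounded_lattice,distrib_lattice} \<Rightarrow> 'a" where
  "vee x = (THE m. is_glb {y. \<not> y \<le> x} m)"

end

theory Submission
  imports Defs
begin


section \<open>Rank theory\<close>

lemma rank_level_subset: "rank_level S lt n \<subseteq> S"
  by (cases n) auto

lemma rank_level_Suc_mono: "rank_level S lt n \<subseteq> rank_level S lt (Suc n)"
proof (induction n)
  case 0 then show ?case by simp
next
  case (Suc n) then show ?case by auto
qed

lemma rank_level_mono: "m \<le> n \<Longrightarrow> rank_level S lt m \<subseteq> rank_level S lt n"
proof (induction n rule: dec_induct)
  case base then show ?case by simp
next
  case (step n) then show ?case using rank_level_Suc_mono[of S lt n] by blast
qed

lemma found_le_iff: "p \<in> rank_level S lt (Suc k) \<longleftrightarrow> found_rank S lt p \<le> enat k"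
proof
  assume h: "p \<in> rank_level S lt (Suc k)"
  then have "(LEAST n. p \<in> rank_level S lt (Suc n)) \<le> k" by (rule Least_le)
  with h show "found_rank S lt p \<le> enat k" unfolding found_rank_def by auto
next
  assume h: "found_rank S lt p \<le> enat k"
  then have ex: "\<exists>n. p \<in> rank_level S lt (Suc n)" unfolding found_rank_def
    by (auto split: if_splits)
  then have le: "(LEAST n. p \<in> rank_level S lt (Suc n)) \<le> k"
    using h unfolding found_rank_def by auto
  have "p \<in> rank_level S lt (Suc (LEAST n. p \<in> rank_level S lt (Suc n)))"
    using ex by (rule LeastI_ex)
  then show "p \<in> rank_level S lt (Suc k)"
  proof -
    have "rank_level S lt (Suc (LEAST n. p \<in> rank_level S lt (Suc n))) \<subseteq> rank_level S lt (Suc k)"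
      using le by (intro rank_level_mono) simp
    then show ?thesis using \<open>p \<in> rank_level S lt (Suc (LEAST n. p \<in> rank_level S lt (Suc n)))\<close> by (rule subsetD)
  qed
qed

lemma found_in_S: "found_rank S lt p \<noteq> \<infinity> \<Longrightarrow> p \<in> S"
proof -
  assume "found_rank S lt p \<noteq> \<infinity>"
  then obtain k where "found_rank S lt p = enat k" by auto
  then have "p \<in> rank_level S lt (Suc k)" by (intro found_le_iff[THEN iffD2]) simp
  then show ?thesis by (rule subsetD[OF rank_level_subset])
qed

lemma found_less:
  assumes "found_rank S lt p \<le> enat k" "lt q p" "q \<in> S"
  shows "found_rank S lt q < enat k"
proof -
  have p: "p \<in> rank_level S lt (Suc k)" using assms(1) by (rule found_le_iff[THEN iffD2])
  then have q: "q \<in> rank_level S lt k" using assms by simp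
  show ?thesis
  proof (cases k)
    case 0 then show ?thesis using q by simp
  next
    case (Suc k')
    then have "found_rank S lt q \<le> enat k'" using q by (intro found_le_iff[THEN iffD1]) simp
    then show ?thesis using Suc
      by (metis Suc_ile_eq order_le_less_trans enat_ord_simps(2) lessI)
  qed
qed

lemma found_step_down:
  assumes "found_rank S lt p = enat (Suc j)"
  shows "\<exists>q\<in>S. lt q p \<and> found_rank S lt q = enat j"
proof -
  have p1: "p \<in> rank_level S lt (Suc (Suc j))" using assms by (intro found_le_iff[THEN iffD2]) simp
  have p2: "p \<notin> rank_level S lt (Suc j)"
  proof
    assume "p \<in> rank_level S lt (Suc j)"
    then have "found_rank S lt p \<le> enat j" by (rule found_le_iff[THEN iffD1])
    then show False using assms by simp
  qed
  have pS: "p \<in> S" by (rule subsetD[OF rank_level_subset p1])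
  have "\<not> (\<forall>q\<in>S. lt q p \<longrightarrow> q \<in> rank_level S lt j)"
    using p2 pS unfolding rank_level.simps(2)[of S lt j] by blast
  then obtain q where q: "q \<in> S" "lt q p" "q \<notin> rank_level S lt j" by blast
  have q1: "q \<in> rank_level S lt (Suc j)"
    using p1 q(1,2) unfolding rank_level.simps(2)[of S lt "Suc j"] by blast
  then have le: "found_rank S lt q \<le> enat j" by (rule found_le_iff[THEN iffD1])
  then obtain m where m: "found_rank S lt q = enat m" "m \<le> j"
    by (cases "found_rank S lt q") auto
  have "m = j"
  proof (rule ccontr)
    assume "m \<noteq> j"
    then obtain j' where j': "j = Suc j'" "m \<le> j'" using m by (cases j) auto
    then have "q \<in> rank_level S lt (Suc j')" using m by (intro found_le_iff[THEN iffD2]) simp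
    then show False using q(3) unfolding j'(1) by blast
  qed
  then show ?thesis using q m by auto
qed

lemma found_transport:
  assumes surj: "f ` S = S'" and ord: "\<And>p q. p \<in> S \<Longrightarrow> q \<in> S \<Longrightarrow> lt q p \<longleftrightarrow> lt' (f q) (f p)"
  shows "p \<in> S \<Longrightarrow> f p \<in> rank_level S' lt' n \<longleftrightarrow> p \<in> rank_level S lt n"
proof (induction n arbitrary: p)
  case 0 then show ?case by simp
next
  case (Suc n)
  have "f p \<in> rank_level S' lt' (Suc n) \<longleftrightarrow> (\<forall>q\<in>S. lt' (f q) (f p) \<longrightarrow> f q \<in> rank_level S' lt' n)"
    using Suc.prems surj by auto
  also have "\<dots> \<longleftrightarrow> (\<forall>q\<in>S. lt q p \<longrightarrow> q \<in> rank_level S lt n)"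
    using Suc ord by auto
  finally show ?case using Suc.prems by simp
qed

lemma found_rank_transport:
  assumes surj: "f ` S = S'" and ord: "\<And>p q. p \<in> S \<Longrightarrow> q \<in> S \<Longrightarrow> lt q p \<longleftrightarrow> lt' (f q) (f p)"
    and "p \<in> S"
  shows "found_rank S' lt' (f p) = found_rank S lt p"
proof -
  have eq: "\<And>n. f p \<in> rank_level S' lt' n \<longleftrightarrow> p \<in> rank_level S lt n"
    using found_transport[where f=f and S=S and S'=S' and lt=lt and lt'=lt', OF surj ord] assms(3) by blast
  show ?thesis unfolding found_rank_def by (simp only: eq)
qed

lemma found_local:
  assumes sub: "S' \<subseteq> S" and down: "\<And>q. q \<in> S \<Longrightarrow> q \<subseteq> p \<Longrightarrow> q \<in> S'"
  shows "q \<subseteq> p \<Longrightarrow> q \<in> S' \<Longrightarrow> q \<in> rank_level S (\<subset>) n \<longleftrightarrow> q \<in> rank_level S' (\<subset>) n"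
proof (induction n arbitrary: q)
  case 0 then show ?case by simp
next
  case (Suc n)
  have A: "\<And>r. r \<in> S \<Longrightarrow> r \<subset> q \<Longrightarrow> r \<in> S' \<and> r \<subseteq> p" using down Suc.prems by blast
  have B: "r \<in> rank_level S (\<subset>) n \<longleftrightarrow> r \<in> rank_level S' (\<subset>) n" if "r \<in> S" "r \<subset> q" for r
  proof -
    have "r \<subseteq> p" "r \<in> S'" using A that by blast+
    then show ?thesis by (rule Suc.IH)
  qed
  have qS: "q \<in> S" using Suc.prems sub by blast
  have "q \<in> rank_level S (\<subset>) (Suc n) \<longleftrightarrow> (\<forall>r\<in>S. r \<subset> q \<longrightarrow> r \<in> rank_level S (\<subset>) n)"
    using qS by (simp only: rank_level.simps mem_Collect_eq simp_thms)
  also have "\<dots> \<longleftrightarrow> (\<forall>r\<in>S'. r \<subset> q \<longrightarrow> r \<in> rank_level S' (\<subset>) n)"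
  proof (intro iffI ballI impI)
    fix r assume H: "\<forall>r\<in>S. r \<subset> q \<longrightarrow> r \<in> rank_level S (\<subset>) n" and r: "r \<in> S'" "r \<subset> q"
    then have "r \<in> S" using sub by blast
    then show "r \<in> rank_level S' (\<subset>) n" using H r B by blast
  next
    fix r assume H: "\<forall>r\<in>S'. r \<subset> q \<longrightarrow> r \<in> rank_level S' (\<subset>) n" and r: "r \<in> S" "r \<subset> q"
    then have "r \<in> S'" using A by blast
    then show "r \<in> rank_level S (\<subset>) n" using H r B by blast
  qed
  also have "\<dots> \<longleftrightarrow> q \<in> rank_level S' (\<subset>) (Suc n)"
    using Suc.prems(2) by (simp only: rank_level.simps mem_Collect_eq simp_thms)
  finally show ?case .
qed

lemma found_rank_local:
  assumes sub: "S' \<subseteq> S" and down: "\<And>q. q \<in> S \<Longrightarrow> q \<subseteq> p \<Longrightarrow> q \<in> S'" and "p \<in> S'"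
  shows "found_rank S' (\<subset>) p = found_rank S (\<subset>) p"
proof -
  have eq: "\<And>n. p \<in> rank_level S' (\<subset>) n \<longleftrightarrow> p \<in> rank_level S (\<subset>) n"
    using found_local[OF sub down, of p] assms(3) by blast
  show ?thesis unfolding found_rank_def by (simp only: eq)
qed



section \<open>Co-Heyting difference\<close>

lemma cdiff_spec:
  fixes a b :: "'a::{bounded_lattice,distrib_lattice}"
  assumes "co_heyting TYPE('a)"
  shows "a \<le> sup b (cdiff a b) \<and> (\<forall>c'. a \<le> sup b c' \<longrightarrow> cdiff a b \<le> c')"
proof -
  obtain c where c: "a \<le> sup b c \<and> (\<forall>c'. a \<le> sup b c' \<longrightarrow> c \<le> c')"
    using assms unfolding co_heyting_def by blast
  have "\<exists>!c. a \<le> sup b c \<and> (\<forall>c'. a \<le> sup b c' \<longrightarrow> c \<le> c')"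
  proof (rule ex1I[of _ c])
    show "a \<le> sup b c \<and> (\<forall>c'. a \<le> sup b c' \<longrightarrow> c \<le> c')" by (rule c)
    fix d assume d: "a \<le> sup b d \<and> (\<forall>c'. a \<le> sup b c' \<longrightarrow> d \<le> c')"
    then have "d \<le> c" using c by blast
    moreover have "c \<le> d" using c d by blast
    ultimately show "d = c" by (rule antisym)
  qed
  then show ?thesis unfolding cdiff_def by (rule theI')
qed

lemma cdiff_le_iff:
  fixes a b :: "'a::{bounded_lattice,distrib_lattice}"
  assumes "co_heyting TYPE('a)"
  shows "cdiff a b \<le> c \<longleftrightarrow> a \<le> sup b c"
proof
  assume "cdiff a b \<le> c"
  moreover have "a \<le> sup b (cdiff a b)" using cdiff_spec[OF assms] by blast
  ultimately show "a \<le> sup b c" by (meson order_trans sup_mono order_refl)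
next
  assume "a \<le> sup b c" then show "cdiff a b \<le> c" using cdiff_spec[OF assms] by blast
qed

lemma cdiff_self:
  fixes a :: "'a::{bounded_lattice,distrib_lattice}"
  assumes "co_heyting TYPE('a)"
  shows "cdiff a a = bot"
  using cdiff_le_iff[OF assms, of a a bot] by (simp add: bot_unique)

section \<open>Prime filters\<close>

lemma pf_top: "prime_filter P \<Longrightarrow> top \<in> P" unfolding prime_filter_def by blast
lemma pf_bot: "prime_filter P \<Longrightarrow> bot \<notin> P" unfolding prime_filter_def by blast
lemma pf_up: "prime_filter P \<Longrightarrow> a \<in> P \<Longrightarrow> a \<le> b \<Longrightarrow> b \<in> P" unfolding prime_filter_def by blast
lemma pf_inf: "prime_filter P \<Longrightarrow> a \<in> P \<Longrightarrow> b \<in> P \<Longrightarrow> inf a b \<in> P" unfolding prime_filter_def by blast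
lemma pf_sup: "prime_filter P \<Longrightarrow> sup a b \<in> P \<Longrightarrow> a \<in> P \<or> b \<in> P" unfolding prime_filter_def by blast
lemma pf_sup_iff: "prime_filter P \<Longrightarrow> sup a b \<in> P \<longleftrightarrow> a \<in> P \<or> b \<in> P"
  using pf_sup pf_up by (metis sup_ge1 sup_ge2)

lemma Spec_iff: "P \<in> Spec TYPE('a::{bounded_lattice,distrib_lattice}) \<longleftrightarrow> prime_filter P"
  unfolding Spec_def by simp

lemma prime_filterI:
  "top \<in> P \<Longrightarrow> bot \<notin> P \<Longrightarrow> (\<And>a b. a \<in> P \<Longrightarrow> a \<le> b \<Longrightarrow> b \<in> P)
   \<Longrightarrow> (\<And>a b. a \<in> P \<Longrightarrow> b \<in> P \<Longrightarrow> inf a b \<in> P)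
   \<Longrightarrow> (\<And>a b. sup a b \<in> P \<Longrightarrow> a \<in> P \<or> b \<in> P) \<Longrightarrow> prime_filter P"
  unfolding prime_filter_def by blast

definition isfilter :: "'a::{bounded_lattice,distrib_lattice} set \<Rightarrow> bool" where
  "isfilter F \<longleftrightarrow> (\<forall>a b. a \<in> F \<longrightarrow> a \<le> b \<longrightarrow> b \<in> F) \<and> (\<forall>a b. a \<in> F \<longrightarrow> b \<in> F \<longrightarrow> inf a b \<in> F)"

lemma prime_filter_thm:
  fixes c :: "'a::{bounded_lattice,distrib_lattice}"
  assumes Ibot: "bot \<in> I" and Idown: "\<And>a b. b \<in> I \<Longrightarrow> a \<le> b \<Longrightarrow> a \<in> I"
    and Isup: "\<And>a b. a \<in> I \<Longrightarrow> b \<in> I \<Longrightarrow> sup a b \<in> I"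
    and cI: "c \<notin> I"
  shows "\<exists>R. prime_filter R \<and> c \<in> R \<and> R \<inter> I = {}"
proof -
  define A where "A = {F. isfilter F \<and> c \<in> F \<and> F \<inter> I = {}}"
  have upc: "{z. c \<le> z} \<in> A"
    unfolding A_def isfilter_def using cI Idown by auto
  have "\<forall>C\<in>chains A. \<exists>U\<in>A. \<forall>X\<in>C. X \<subseteq> U"
  proof
    fix C assume C: "C \<in> chains A"
    show "\<exists>U\<in>A. \<forall>X\<in>C. X \<subseteq> U"
    proof (cases "C = {}")
      case True then show ?thesis using upc by blast
    next
      case False
      have CA: "C \<subseteq> A" using C unfolding chains_def by blast
      have ch: "\<And>X Y. X \<in> C \<Longrightarrow> Y \<in> C \<Longrightarrow> X \<subseteq> Y \<or> Y \<subseteq> X"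
        using C unfolding chains_def chain_subset_def by blast
      have "\<Union>C \<in> A"
        unfolding A_def isfilter_def
      proof (intro CollectI conjI allI impI)
        fix a b assume "a \<in> \<Union>C" "a \<le> b" then show "b \<in> \<Union>C"
          using CA unfolding A_def isfilter_def by blast
      next
        fix a b assume a: "a \<in> \<Union>C" and b: "b \<in> \<Union>C"
        then obtain X Y where X: "X \<in> C" "a \<in> X" and Y: "Y \<in> C" "b \<in> Y" by blast
        show "inf a b \<in> \<Union>C"
        proof (cases "X \<subseteq> Y")
          case True
          then have "inf a b \<in> Y" using X Y CA unfolding A_def isfilter_def by blast
          then show ?thesis using Y by blast
        next
          case False
          then have "Y \<subseteq> X" using ch X Y by blast
          then have "inf a b \<in> X" using X Y CA unfolding A_def isfilter_def by blast
          then show ?thesis using X by blast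
        qed
      next
        show "c \<in> \<Union>C" using False CA unfolding A_def by blast
      next
        show "\<Union>C \<inter> I = {}" using CA unfolding A_def by blast
      qed
      then show ?thesis by blast
    qed
  qed
  from Zorn_Lemma2[OF this] obtain M where M: "M \<in> A" and Mmax0: "\<forall>X\<in>A. M \<subseteq> X \<longrightarrow> X = M"
    by (elim bexE)
  have Mmax: "\<And>X. X \<in> A \<Longrightarrow> M \<subseteq> X \<Longrightarrow> X = M" using Mmax0 by blast
  have Mf: "isfilter M" and cM: "c \<in> M" and MI: "M \<inter> I = {}" using M unfolding A_def by auto
  have Mup: "\<And>a b. a \<in> M \<Longrightarrow> a \<le> b \<Longrightarrow> b \<in> M" using Mf unfolding isfilter_def by blast
  have Minf: "\<And>a b. a \<in> M \<Longrightarrow> b \<in> M \<Longrightarrow> inf a b \<in> M" using Mf unfolding isfilter_def by blast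
  have ext: "\<exists>m\<in>M. inf m a \<in> I" if aM: "a \<notin> M" for a
  proof (rule ccontr)
    assume nex: "\<not> (\<exists>m\<in>M. inf m a \<in> I)"
    define Ma where "Ma = {z. \<exists>m\<in>M. inf m a \<le> z}"
    have "Ma \<in> A" unfolding A_def isfilter_def
    proof (intro CollectI conjI allI impI)
      fix u v assume uv: "u \<in> Ma" "u \<le> v"
      then obtain m where "m \<in> M" "inf m a \<le> u" unfolding Ma_def by blast
      moreover from this(2) uv(2) have "inf m a \<le> v" by (rule order.trans)
      ultimately show "v \<in> Ma" unfolding Ma_def by blast
    next
      fix u v assume "u \<in> Ma" "v \<in> Ma"
      then obtain m1 m2 where m: "m1 \<in> M" "inf m1 a \<le> u" "m2 \<in> M" "inf m2 a \<le> v" unfolding Ma_def by blast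
      have f1: "inf (inf m1 m2) a \<le> inf m1 a" by (rule inf_mono) simp_all
      have f2: "inf (inf m1 m2) a \<le> inf m2 a" by (rule inf_mono) simp_all
      have g1: "inf (inf m1 m2) a \<le> u" using f1 m(2) by (rule order.trans)
      have g2: "inf (inf m1 m2) a \<le> v" using f2 m(4) by (rule order.trans)
      have "inf (inf m1 m2) a \<le> inf u v" using g1 g2 by (rule le_infI)
      then show "inf u v \<in> Ma" unfolding Ma_def using m Minf by blast
    next
      have "inf c a \<le> c" by (rule inf_le1)
      then show "c \<in> Ma" unfolding Ma_def using cM by blast
    next
      show "Ma \<inter> I = {}"
      proof (rule ccontr)
        assume "Ma \<inter> I \<noteq> {}"
        then obtain z m where "m \<in> M" "inf m a \<le> z" "z \<in> I" unfolding Ma_def by blast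
        then show False using nex Idown by blast
      qed
    qed
    moreover have "M \<subseteq> Ma"
    proof
      fix z assume "z \<in> M"
      moreover have "inf z a \<le> z" by (rule inf_le1)
      ultimately show "z \<in> Ma" unfolding Ma_def by blast
    qed
    ultimately have "Ma = M" using Mmax by blast
    moreover have "a \<in> Ma"
    proof -
      have "inf c a \<le> a" by (rule inf_le2)
      then show ?thesis unfolding Ma_def using cM by blast
    qed
    ultimately show False using aM by blast
  qed
  have "prime_filter M"
  proof (rule prime_filterI)
    have "c \<le> top" by (rule top_greatest)
    then show "top \<in> M" using cM by (rule_tac Mup)
    show "bot \<notin> M" using MI Ibot by blast
    show "\<And>a b. a \<in> M \<Longrightarrow> a \<le> b \<Longrightarrow> b \<in> M" by (rule Mup)
    show "\<And>a b. a \<in> M \<Longrightarrow> b \<in> M \<Longrightarrow> inf a b \<in> M" by (rule Minf)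
  next
    fix a b assume ab: "sup a b \<in> M"
    show "a \<in> M \<or> b \<in> M"
    proof (rule ccontr)
      assume "\<not> (a \<in> M \<or> b \<in> M)"
      then obtain m1 m2 where m: "m1 \<in> M" "inf m1 a \<in> I" "m2 \<in> M" "inf m2 b \<in> I" using ext by blast
      have e1: "inf (inf m1 m2) a \<le> inf m1 a" by (rule inf_mono) simp_all
      have e2: "inf (inf m1 m2) b \<le> inf m2 b" by (rule inf_mono) simp_all
      have "inf (inf m1 m2) (sup a b) = sup (inf (inf m1 m2) a) (inf (inf m1 m2) b)"
        by (rule inf_sup_distrib1)
      also have "\<dots> \<le> sup (inf m1 a) (inf m2 b)" using e1 e2 by (rule sup_mono)
      finally have "inf (inf m1 m2) (sup a b) \<le> sup (inf m1 a) (inf m2 b)" .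
      then have "inf (inf m1 m2) (sup a b) \<in> I" using m Isup Idown by blast
      moreover have "inf (inf m1 m2) (sup a b) \<in> M" using m ab Minf by blast
      ultimately show False using MI by blast
    qed
  qed
  then show ?thesis using cM MI by blast
qed

lemma pft_le:
  fixes a y :: "'a::{bounded_lattice,distrib_lattice}"
  assumes "\<not> a \<le> y"
  shows "\<exists>R. prime_filter R \<and> a \<in> R \<and> y \<notin> R"
proof -
  have "\<exists>R. prime_filter R \<and> a \<in> R \<and> R \<inter> {z. z \<le> y} = {}"
  proof (rule prime_filter_thm)
    show "bot \<in> {z. z \<le> y}" by simp
    show "\<And>a b. b \<in> {z. z \<le> y} \<Longrightarrow> a \<le> b \<Longrightarrow> a \<in> {z. z \<le> y}"
      unfolding mem_Collect_eq by (rule order.trans)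
    show "\<And>a b. a \<in> {z. z \<le> y} \<Longrightarrow> b \<in> {z. z \<le> y} \<Longrightarrow> sup a b \<in> {z. z \<le> y}"
      unfolding mem_Collect_eq by (rule le_supI)
    show "a \<notin> {z. z \<le> y}" using assms by simp
  qed
  then show ?thesis by blast
qed

lemma esakia:
  fixes c b :: "'a::{bounded_lattice,distrib_lattice}"
  assumes ch: "co_heyting TYPE('a)" and R: "prime_filter R" and cb: "cdiff c b \<in> R"
  shows "\<exists>R'. prime_filter R' \<and> R' \<subseteq> R \<and> c \<in> R' \<and> b \<notin> R'"
proof -
  define I where "I = {z. \<exists>w. w \<notin> R \<and> z \<le> sup b w}"
  have "\<exists>R'. prime_filter R' \<and> c \<in> R' \<and> R' \<inter> I = {}"
  proof (rule prime_filter_thm)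
    show "bot \<in> I" unfolding I_def using pf_bot[OF R] bot_least by blast
    show "\<And>a b. b \<in> I \<Longrightarrow> a \<le> b \<Longrightarrow> a \<in> I" unfolding I_def mem_Collect_eq by (meson order.trans)
    show "\<And>a b. a \<in> I \<Longrightarrow> b \<in> I \<Longrightarrow> sup a b \<in> I"
    proof -
      fix a1 a2 assume "a1 \<in> I" "a2 \<in> I"
      then obtain w1 w2 where w: "w1 \<notin> R" "a1 \<le> sup b w1" "w2 \<notin> R" "a2 \<le> sup b w2" unfolding I_def by blast
      have "sup w1 w2 \<notin> R"
      proof
        assume "sup w1 w2 \<in> R"
        then have "w1 \<in> R \<or> w2 \<in> R" by (rule pf_sup[OF R])
        then show False using w(1,3) by (elim disjE) simp_all
      qed
      moreover have "sup a1 a2 \<le> sup b (sup w1 w2)"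
      proof (rule le_supI)
        have "sup b w1 \<le> sup b (sup w1 w2)" by (rule sup_mono) simp_all
        with w(2) show "a1 \<le> sup b (sup w1 w2)" by (rule order.trans)
        have "sup b w2 \<le> sup b (sup w1 w2)" by (rule sup_mono) simp_all
        with w(4) show "a2 \<le> sup b (sup w1 w2)" by (rule order.trans)
      qed
      ultimately show "sup a1 a2 \<in> I" unfolding I_def by blast
    qed
    show "c \<notin> I"
    proof
      assume "c \<in> I"
      then obtain w where "w \<notin> R" "c \<le> sup b w" unfolding I_def by blast
      then have "cdiff c b \<le> w" using cdiff_le_iff[OF ch] by blast
      then show False using pf_up[OF R cb] \<open>w \<notin> R\<close> by blast
    qed
  qed
  then obtain R' where R': "prime_filter R'" "c \<in> R'" "R' \<inter> I = {}" by blast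
  have "b \<le> sup b bot" by (rule sup_ge1)
  then have "b \<in> I" unfolding I_def using pf_bot[OF R] by blast
  then have "b \<notin> R'" using R' by blast
  moreover have "R' \<subseteq> R"
  proof
    fix r assume "r \<in> R'"
    show "r \<in> R"
    proof (rule ccontr)
      assume "r \<notin> R"
      moreover have "r \<le> sup b r" by (rule sup_ge2)
      ultimately have "r \<in> I" unfolding I_def by blast
      then show False using R' \<open>r \<in> R'\<close> by blast
    qed
  qed
  ultimately show ?thesis using R' by blast
qed



lemma height_mono:
  fixes P Q :: "'a::{bounded_lattice,distrib_lattice} set"
  assumes "P \<in> Spec TYPE('a)" "Q \<in> Spec TYPE('a)" "P \<subseteq> Q"
  shows "height P \<le> height Q"
proof (cases "P = Q")
  case True then show ?thesis by simp
next
  case False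
  then have PQ: "P \<subset> Q" using assms(3) by (rule_tac psubsetI)
  show ?thesis
  proof (cases "height Q")
    case (enat k)
    then have "found_rank (Spec TYPE('a)) (\<subset>) Q \<le> enat k" unfolding height_def by simp
    then have "found_rank (Spec TYPE('a)) (\<subset>) P < enat k"
      using PQ assms(1) by (rule found_less)
    then show ?thesis using enat unfolding height_def by simp
  next
    case infinity then show ?thesis by simp
  qed
qed

lemma codim_le_height:
  fixes a :: "'a::{bounded_lattice,distrib_lattice}"
  assumes "P \<in> Spec TYPE('a)" "a \<in> P"
  shows "codim a \<le> height P"
  unfolding codim_def by (rule INF_lower) (use assms in simp)

lemma codim_anti:
  fixes a b :: "'a::{bounded_lattice,distrib_lattice}"
  assumes "a \<le> b"
  shows "codim b \<le> codim a"
  unfolding codim_def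
proof (rule INF_superset_mono)
  show "{p \<in> Spec TYPE('a). a \<in> p} \<subseteq> {p \<in> Spec TYPE('a). b \<in> p}"
  proof
    fix p assume "p \<in> {p \<in> Spec TYPE('a). a \<in> p}"
    then have p: "p \<in> Spec TYPE('a)" "a \<in> p" by simp_all
    then have "b \<in> p" using assms pf_up Spec_iff by metis
    then show "p \<in> {p \<in> Spec TYPE('a). b \<in> p}" using p by simp
  qed
qed simp

lemma codim_bot: "codim (bot::'a::{bounded_lattice,distrib_lattice}) = \<infinity>"
proof -
  have e: "{p \<in> Spec TYPE('a). (bot::'a) \<in> p} = {}" using pf_bot Spec_iff by blast
  show ?thesis unfolding codim_def e by (simp add: top_enat_def)
qed

lemma hausdorff_fin:
  fixes a :: "'a::{bounded_lattice,distrib_lattice}"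
  assumes "hausdorff TYPE('a)" "a \<noteq> bot"
  shows "\<exists>P\<in>Spec TYPE('a). a \<in> P \<and> height P \<noteq> \<infinity>"
proof (rule ccontr)
  assume "\<not> ?thesis"
  then have "\<And>p. p \<in> {p \<in> Spec TYPE('a). a \<in> p} \<Longrightarrow> \<infinity> \<le> height p" by auto
  then have "\<infinity> \<le> codim a" unfolding codim_def by (rule INF_greatest)
  then have "codim a = \<infinity>" by simp
  then show False using assms unfolding hausdorff_def by blast
qed

lemma finite_T:
  assumes ch: "co_heyting TYPE('a::{bounded_lattice,distrib_lattice})"
    and pc: "precompact TYPE('a)"
  shows "finite {P \<in> Spec TYPE('a). height P \<le> enat h}"
proof -
  define I :: "'a set" where "I = codim_ideal (Suc h)"
  define T where "T = {P \<in> Spec TYPE('a). height P \<le> enat h}"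
  define Qt where "Qt = (UNIV::'a set) // quot_rel I"
  have finQ: "finite Qt" using pc unfolding precompact_def Qt_def I_def by simp
  have sat: "b \<in> P" if P: "P \<in> T" and a: "a \<in> P" and ab: "(a, b) \<in> quot_rel I" for P a b
  proof -
    have Pp: "prime_filter P" using P unfolding T_def Spec_iff by simp
    have hP: "height P \<le> enat h" using P unfolding T_def by simp
    have "enat (Suc h) \<le> codim (sup (cdiff a b) (cdiff b a))"
      using ab unfolding quot_rel_def I_def codim_ideal_def by simp
    also have "\<dots> \<le> codim (cdiff a b)" by (rule codim_anti) (rule sup_ge1)
    finally have cd: "enat (Suc h) \<le> codim (cdiff a b)" .
    have "a \<le> sup b (cdiff a b)" using cdiff_spec[OF ch] by blast
    then have "sup b (cdiff a b) \<in> P" using Pp a by (rule_tac pf_up)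
    then have "b \<in> P \<or> cdiff a b \<in> P" using Pp pf_sup by blast
    moreover have "cdiff a b \<notin> P"
    proof
      assume "cdiff a b \<in> P"
      then have "codim (cdiff a b) \<le> height P" using P unfolding T_def by (rule_tac codim_le_height) simp_all
      then have "enat (Suc h) \<le> enat h" using cd hP by (meson order.trans)
      then show False by simp
    qed
    ultimately show ?thesis by blast
  qed
  have refl: "(a, a) \<in> quot_rel I" for a :: 'a
    unfolding quot_rel_def I_def codim_ideal_def by (simp add: cdiff_self[OF ch] codim_bot)
  define phi where "phi P = {C \<in> Qt. C \<subseteq> P}" for P
  have rec: "P = \<Union>(phi P)" if "P \<in> T" for P
  proof
    show "\<Union>(phi P) \<subseteq> P" unfolding phi_def by blast
    show "P \<subseteq> \<Union>(phi P)"
    proof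
      fix a assume a: "a \<in> P"
      have "quot_rel I `` {a} \<in> Qt" unfolding Qt_def by (rule quotientI) simp
      moreover have "quot_rel I `` {a} \<subseteq> P" using sat[OF that a] by blast
      moreover have "a \<in> quot_rel I `` {a}" using refl by blast
      ultimately show "a \<in> \<Union>(phi P)" unfolding phi_def by blast
    qed
  qed
  have "inj_on phi T"
  proof (rule inj_onI)
    fix P Q assume "P \<in> T" "Q \<in> T" "phi P = phi Q"
    then show "P = Q" using rec by metis
  qed
  moreover have "phi ` T \<subseteq> Pow Qt" unfolding phi_def by blast
  then have "finite (phi ` T)" using finQ by (meson finite_Pow_iff finite_subset)
  ultimately have "finite T" by (rule finite_imageD[rotated])
  then show ?thesis unfolding T_def .
qed

lemma step_down_chain:
  fixes P :: "'a::{bounded_lattice,distrib_lattice} set"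
  shows "height P = enat (j + d) \<Longrightarrow> \<exists>G\<in>Spec TYPE('a). G \<subseteq> P \<and> height G = enat j"
proof (induction d arbitrary: P)
  case 0
  then have "P \<in> Spec TYPE('a)" unfolding height_def by (intro found_in_S[of "Spec TYPE('a)" "(\<subset>)" P]) simp
  then show ?case using 0 by auto
next
  case (Suc d)
  then have "found_rank (Spec TYPE('a)) (\<subset>) P = enat (Suc (j + d))" unfolding height_def by simp
  from found_step_down[OF this] obtain Q where Q: "Q \<in> Spec TYPE('a)" "Q \<subset> P" "found_rank (Spec TYPE('a)) (\<subset>) Q = enat (j + d)"
    by (elim bexE conjE) simp
  have "height Q = enat (j + d)" using Q(3) unfolding height_def .
  from Suc.IH[OF this] obtain G where "G \<in> Spec TYPE('a)" "G \<subseteq> Q" "height G = enat j"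
    by (elim bexE conjE) simp
  moreover have "G \<subseteq> P" using \<open>G \<subseteq> Q\<close> Q(2) by (rule subset_psubset_trans[THEN psubset_imp_subset])
  ultimately show ?case by blast
qed

lemma meet_avoid:
  fixes P :: "'a::{bounded_lattice,distrib_lattice} set"
  assumes P: "prime_filter P"
  shows "finite T \<Longrightarrow> (\<forall>Q\<in>T. prime_filter Q \<and> (\<exists>a\<in>P. a \<notin> Q)) \<Longrightarrow> \<exists>c\<in>P. \<forall>Q\<in>T. c \<notin> Q"
proof (induction T rule: finite_induct)
  case empty then show ?case using pf_top[OF P] by blast
next
  case (insert Q T)
  then obtain c where c: "c \<in> P" "\<forall>Q'\<in>T. c \<notin> Q'" by blast
  obtain a where a: "a \<in> P" "a \<notin> Q" using insert.prems by blast
  have "inf c a \<in> P" using P c(1) a(1) by (rule pf_inf)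
  moreover have "inf c a \<notin> Q'" if "Q' \<in> insert Q T" for Q'
  proof
    assume h: "inf c a \<in> Q'"
    have Q': "prime_filter Q'" using insert.prems that by blast
    show False
    proof (cases "Q' = Q")
      case True
      have "a \<in> Q'" using pf_up[OF Q' h] by (simp add: inf_le2)
      then show False using a True by simp
    next
      case False
      then have "Q' \<in> T" using that by simp
      moreover have "c \<in> Q'" using pf_up[OF Q' h] by (simp add: inf_le1)
      ultimately show False using c by blast
    qed
  qed
  ultimately show ?case by blast
qed

lemma join_hit:
  fixes P :: "'a::{bounded_lattice,distrib_lattice} set"
  assumes P: "prime_filter P"
  shows "finite T \<Longrightarrow> (\<forall>Q\<in>T. prime_filter Q \<and> (\<exists>b\<in>Q. b \<notin> P)) \<Longrightarrow> \<exists>b. b \<notin> P \<and> (\<forall>Q\<in>T. b \<in> Q)"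
proof (induction T rule: finite_induct)
  case empty then show ?case using pf_bot[OF P] by blast
next
  case (insert Q T)
  then obtain b where b: "b \<notin> P" "\<forall>Q'\<in>T. b \<in> Q'" by blast
  obtain a where a: "a \<in> Q" "a \<notin> P" using insert.prems by blast
  have "sup b a \<notin> P"
  proof
    assume "sup b a \<in> P"
    then have "b \<in> P \<or> a \<in> P" by (rule pf_sup[OF P])
    then show False using a b by blast
  qed
  moreover have "sup b a \<in> Q'" if "Q' \<in> insert Q T" for Q'
  proof -
    have Q': "prime_filter Q'" using insert.prems that by blast
    show ?thesis
    proof (cases "Q' = Q")
      case True
      then show ?thesis using pf_up[OF Q' _ sup_ge2] a by simp
    next
      case False
      then have "Q' \<in> T" using that by simp
      then show ?thesis using pf_up[OF Q' _ sup_ge1] b by blast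
    qed
  qed
  ultimately show ?case by blast
qed



lemma principal:
  fixes P :: "'a::{bounded_lattice,distrib_lattice} set"
  assumes ch: "co_heyting TYPE('a)" and pc: "precompact TYPE('a)" and hd: "hausdorff TYPE('a)"
    and PS: "P \<in> Spec TYPE('a)" and hP: "height P = enat h"
  shows "\<exists>e\<in>P. \<forall>f\<in>P. e \<le> f"
proof -
  have Pp: "prime_filter P" using PS Spec_iff by blast
  define T where "T = {Q \<in> Spec TYPE('a). height Q \<le> enat h}"
  have finT: "finite T" unfolding T_def using ch pc by (rule finite_T)
  define T1 where "T1 = {Q \<in> T. \<not> P \<subseteq> Q}"
  define T2 where "T2 = {Q \<in> T. \<not> Q \<subseteq> P}"
  have "finite T1" unfolding T1_def using finT by simp
  moreover have "\<forall>Q\<in>T1. prime_filter Q \<and> (\<exists>a\<in>P. a \<notin> Q)"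
    unfolding T1_def T_def Spec_iff by blast
  ultimately obtain c where c: "c \<in> P" "\<forall>Q\<in>T1. c \<notin> Q" using meet_avoid[OF Pp] by blast
  have "finite T2" unfolding T2_def using finT by simp
  moreover have "\<forall>Q\<in>T2. prime_filter Q \<and> (\<exists>b\<in>Q. b \<notin> P)"
    unfolding T2_def T_def Spec_iff by blast
  ultimately obtain b where b: "b \<notin> P" "\<forall>Q\<in>T2. b \<in> Q" using join_hit[OF Pp] by blast
  define e where "e = cdiff c b"
  have "c \<le> sup b e" unfolding e_def using cdiff_spec[OF ch] by blast
  then have "sup b e \<in> P" using Pp c(1) by (rule_tac pf_up)
  then have "b \<in> P \<or> e \<in> P" using Pp pf_sup by blast
  then have eP: "e \<in> P" using b(1) by blast
  have claim: "P \<subseteq> R" if RS: "R \<in> Spec TYPE('a)" and hR: "height R \<noteq> \<infinity>" and cR: "c \<in> R" and bR: "b \<notin> R" for R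
  proof -
    obtain k where k: "height R = enat k" using hR by (cases "height R") auto
    show ?thesis
    proof (cases "k \<le> h")
      case True
      then have "R \<in> T" unfolding T_def using RS k by simp
      then show ?thesis using c(2) cR unfolding T1_def by blast
    next
      case False
      then have "k = h + (k - h)" by simp
      then have "height R = enat (h + (k - h))" using k by simp
      from step_down_chain[OF this] obtain G where G: "G \<in> Spec TYPE('a)" "G \<subseteq> R" "height G = enat h"
        by (elim bexE conjE) simp
      have GT: "G \<in> T" unfolding T_def using G by simp
      have GP: "G \<subseteq> P"
      proof (rule ccontr)
        assume "\<not> G \<subseteq> P"
        then have "G \<in> T2" unfolding T2_def using GT by simp
        then have "b \<in> G" using b(2) by blast
        then show False using G(2) bR by blast
      qed
      have "G = P"
      proof (rule ccontr)
        assume "G \<noteq> P"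
        then have "G \<subset> P" using GP by blast
        moreover have "found_rank (Spec TYPE('a)) (\<subset>) P \<le> enat h" using hP unfolding height_def by simp
        ultimately have "found_rank (Spec TYPE('a)) (\<subset>) G < enat h" using G(1)
          by (rule_tac found_less) simp_all
        then show False using G(3) unfolding height_def by simp
      qed
      then show ?thesis using G(2) by simp
    qed
  qed
  have "\<forall>f\<in>P. e \<le> f"
  proof (rule ballI, rule ccontr)
    fix f assume fP: "f \<in> P" and nle: "\<not> e \<le> f"
    then have "\<not> c \<le> sup b f" unfolding e_def using cdiff_le_iff[OF ch] by blast
    define w where "w = cdiff c (sup b f)"
    have "w \<noteq> bot"
    proof
      assume "w = bot"
      then have "w \<le> bot" by simp
      then have "c \<le> sup (sup b f) bot" unfolding w_def using cdiff_le_iff[OF ch] by blast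
      then show False using \<open>\<not> c \<le> sup b f\<close> by simp
    qed
    from hausdorff_fin[OF hd this] obtain R where R: "R \<in> Spec TYPE('a)" "w \<in> R" "height R \<noteq> \<infinity>"
      by (elim bexE conjE) simp
    have Rp: "prime_filter R" using R(1) Spec_iff by blast
    from esakia[OF ch Rp] R(2) obtain R' where R': "prime_filter R'" "R' \<subseteq> R" "c \<in> R'" "sup b f \<notin> R'"
      unfolding w_def by blast
    have R'S: "R' \<in> Spec TYPE('a)" using R'(1) Spec_iff by blast
    have "height R' \<le> height R" using R'S R(1) R'(2) by (rule height_mono)
    then have hR': "height R' \<noteq> \<infinity>" using R(3) by (metis enat_ord_simps(5) top.extremum_unique top_enat_def)
    have bR': "b \<notin> R'" using R'(1,4) pf_up[OF R'(1) _ sup_ge1] by blast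
    have "P \<subseteq> R'" using claim[OF R'S hR' R'(3) bR'] .
    then have "f \<in> R'" using fP by blast
    then have "sup b f \<in> R'" using pf_up[OF R'(1) _ sup_ge2] by blast
    then show False using R'(4) by blast
  qed
  then show ?thesis using eP by blast
qed



definition pfx :: "'a::{bounded_lattice,distrib_lattice} \<Rightarrow> 'a set" where
  "pfx x = {z. \<not> z \<le> x}"

lemma cmiD:
  assumes "x \<in> cmi" "is_glb A m" "m \<le> x"
  shows "\<exists>a\<in>A. a \<le> x"
  using assms unfolding cmi_def by blast

lemma cmi_ne_top: "x \<in> cmi \<Longrightarrow> x \<noteq> top"
  unfolding cmi_def by blast

lemma pfx_prime:
  fixes x :: "'a::{bounded_lattice,distrib_lattice}"
  assumes x: "x \<in> cmi"
  shows "prime_filter (pfx x)"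
proof (rule prime_filterI)
  show "top \<in> pfx x" unfolding pfx_def using cmi_ne_top[OF x] top_le by blast
  show "bot \<notin> pfx x" unfolding pfx_def by simp
  show "b \<in> pfx x" if "a \<in> pfx x" "a \<le> b" for a b
  proof -
    have "\<not> b \<le> x"
    proof
      assume "b \<le> x"
      with that(2) have "a \<le> x" by (rule order.trans)
      then show False using that(1) unfolding pfx_def by simp
    qed
    then show ?thesis unfolding pfx_def by simp
  qed
  show "inf a b \<in> pfx x" if "a \<in> pfx x" "b \<in> pfx x" for a b
  proof -
    have "is_glb {a, b} (inf a b)" unfolding is_glb_def by auto
    have "\<not> inf a b \<le> x"
    proof
      assume "inf a b \<le> x"
      from cmiD[OF x \<open>is_glb {a, b} (inf a b)\<close> this] obtain c where "c \<in> {a, b}" "c \<le> x" by blast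
      then show False using that unfolding pfx_def by auto
    qed
    then show ?thesis unfolding pfx_def by simp
  qed
  show "a \<in> pfx x \<or> b \<in> pfx x" if "sup a b \<in> pfx x" for a b
  proof (rule ccontr)
    assume "\<not> (a \<in> pfx x \<or> b \<in> pfx x)"
    then have "a \<le> x" "b \<le> x" unfolding pfx_def by simp_all
    then have "sup a b \<le> x" by (rule le_supI)
    then show False using that unfolding pfx_def by simp
  qed
qed

lemma pfx_sub_iff: "pfx z \<subseteq> pfx y \<longleftrightarrow> y \<le> (z::'a::{bounded_lattice,distrib_lattice})"
proof
  assume h: "pfx z \<subseteq> pfx y"
  have "y \<notin> pfx y" unfolding pfx_def by simp
  then have "y \<notin> pfx z" using h by blast
  then show "y \<le> z" unfolding pfx_def by simp
next
  assume yz: "y \<le> z"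
  show "pfx z \<subseteq> pfx y"
  proof
    fix a assume "a \<in> pfx z"
    then have nz: "\<not> a \<le> z" unfolding pfx_def by simp
    have "\<not> a \<le> y"
    proof
      assume "a \<le> y"
      then have "a \<le> z" using yz by (rule order.trans)
      then show False using nz by simp
    qed
    then show "a \<in> pfx y" unfolding pfx_def by simp
  qed
qed

lemma pfx_psub_iff: "pfx z \<subset> pfx y \<longleftrightarrow> y < (z::'a::{bounded_lattice,distrib_lattice})"
  using pfx_sub_iff[of z y] pfx_sub_iff[of y z] by (auto simp: less_le_not_le)

lemma not_le_enat_Suc: "\<not> h \<le> enat n \<Longrightarrow> enat (Suc n) \<le> h"
  by (cases h) auto

lemma pfx_fin:
  fixes x :: "'a::{bounded_lattice,distrib_lattice}"
  assumes ch: "co_heyting TYPE('a)" and pc: "precompact TYPE('a)" and hd: "hausdorff TYPE('a)"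
    and x: "x \<in> cmi"
  shows "height (pfx x) \<noteq> \<infinity>"
proof
  assume inf: "height (pfx x) = \<infinity>"
  have pS: "pfx x \<in> Spec TYPE('a)" using pfx_prime[OF x] Spec_iff by blast
  define T where "T n = {Q \<in> Spec TYPE('a). height Q \<le> enat n}" for n
  have ex: "\<exists>c. c \<in> pfx x \<and> (\<forall>Q\<in>T n. c \<notin> Q)" for n
  proof -
    have "finite (T n)" unfolding T_def using ch pc by (rule finite_T)
    moreover have "\<forall>Q\<in>T n. prime_filter Q \<and> (\<exists>a\<in>pfx x. a \<notin> Q)"
    proof
      fix Q assume Q: "Q \<in> T n"
      then have QS: "Q \<in> Spec TYPE('a)" and hQ: "height Q \<le> enat n" unfolding T_def by simp_all
      have "\<not> pfx x \<subseteq> Q"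
      proof
        assume "pfx x \<subseteq> Q"
        then have "height (pfx x) \<le> height Q" using pS QS by (rule_tac height_mono) simp_all
        then show False using hQ inf by simp
      qed
      then show "prime_filter Q \<and> (\<exists>a\<in>pfx x. a \<notin> Q)" using QS Spec_iff by blast
    qed
    ultimately have "\<exists>c\<in>pfx x. \<forall>Q\<in>T n. c \<notin> Q" by (rule meet_avoid[OF pfx_prime[OF x]])
    then show ?thesis by blast
  qed
  have ex2: "\<forall>n. \<exists>c. c \<in> pfx x \<and> (\<forall>Q\<in>T n. c \<notin> Q)"
  proof
    fix n show "\<exists>c. c \<in> pfx x \<and> (\<forall>Q\<in>T n. c \<notin> Q)" by (rule ex)
  qed
  from choice[OF ex2] obtain cs where cs0: "\<forall>n. cs n \<in> pfx x \<and> (\<forall>Q\<in>T n. cs n \<notin> Q)"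
    by (elim exE)
  have cs: "cs n \<in> pfx x \<and> (\<forall>Q\<in>T n. cs n \<notin> Q)" for n using cs0 by (rule spec)
  have cod: "enat (Suc n) \<le> codim (cs n)" for n
    unfolding codim_def
  proof (rule INF_greatest)
    fix p assume "p \<in> {p \<in> Spec TYPE('a). cs n \<in> p}"
    then have p: "p \<in> Spec TYPE('a)" "cs n \<in> p" by simp_all
    then have "p \<notin> T n" using cs by blast
    then have "\<not> height p \<le> enat n" using p(1) unfolding T_def by simp
    then show "enat (Suc n) \<le> height p" by (rule not_le_enat_Suc)
  qed
  have glb: "is_glb (range cs) bot"
    unfolding is_glb_def
  proof (intro conjI allI impI ballI)
    fix a assume "a \<in> range cs" then show "bot \<le> a" by simp
  next
    fix m assume lb: "\<forall>a\<in>range cs. m \<le> a"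
    have "codim m = \<infinity>"
    proof (cases "codim m")
      case (enat k)
      have "codim (cs k) \<le> codim m" using lb by (intro codim_anti) simp
      then have "enat (Suc k) \<le> enat k" using cod[of k] enat by (metis order.trans)
      then show ?thesis by simp
    qed simp
    then have "m = bot" using hd unfolding hausdorff_def by blast
    then show "m \<le> bot" by simp
  qed
  from cmiD[OF x glb bot_least] obtain a where "a \<in> range cs" "a \<le> x" by blast
  then show False using cs unfolding pfx_def by auto
qed



lemma cmi_down:
  fixes x :: "'a::{bounded_lattice,distrib_lattice}"
  assumes ch: "co_heyting TYPE('a)" and pc: "precompact TYPE('a)" and hd: "hausdorff TYPE('a)"
    and x: "x \<in> cmi" and QS: "Q \<in> Spec TYPE('a)" and Qx: "Q \<subseteq> pfx x"
  shows "\<exists>y\<in>cmi. Q = pfx y"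
proof -
  have pS: "pfx x \<in> Spec TYPE('a)" using pfx_prime[OF x] Spec_iff by blast
  have Qp: "prime_filter Q" using QS Spec_iff by blast
  obtain hx where hx: "height (pfx x) = enat hx" using pfx_fin[OF ch pc hd x] by (cases "height (pfx x)") auto
  have hQx: "height Q \<le> height (pfx x)" using QS pS Qx by (rule height_mono)
  then obtain hq where hq: "height Q = enat hq" using hx by (cases "height Q") auto
  from principal[OF ch pc hd QS hq] obtain e where e: "e \<in> Q" "\<forall>f\<in>Q. e \<le> f" by (elim bexE)
  define F where "F = {R \<in> Spec TYPE('a). R \<subseteq> pfx x \<and> \<not> R \<subseteq> Q}"
  have "F \<subseteq> {R \<in> Spec TYPE('a). height R \<le> enat hx}"
  proof
    fix R assume "R \<in> F"
    then have R: "R \<in> Spec TYPE('a)" "R \<subseteq> pfx x" unfolding F_def by simp_all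
    then have "height R \<le> height (pfx x)" using pS by (rule_tac height_mono) simp_all
    then show "R \<in> {R \<in> Spec TYPE('a). height R \<le> enat hx}" using R hx by simp
  qed
  then have finF: "finite F" using finite_T[OF ch pc, of hx] by (rule finite_subset)
  have "\<forall>R\<in>F. prime_filter R \<and> (\<exists>b\<in>R. b \<notin> Q)" unfolding F_def Spec_iff by blast
  from join_hit[OF Qp finF this] obtain z where z: "z \<notin> Q" "\<forall>R\<in>F. z \<in> R" by (elim exE conjE)
  define y where "y = sup x z"
  have xQ: "x \<notin> Q" using Qx unfolding pfx_def by blast
  have yQ: "y \<notin> Q"
  proof
    assume "y \<in> Q"
    then have "x \<in> Q \<or> z \<in> Q" unfolding y_def by (rule pf_sup[OF Qp])
    then show False using xQ z(1) by blast
  qed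
  have Qy: "Q = pfx y"
  proof
    show "Q \<subseteq> pfx y"
    proof
      fix a assume a: "a \<in> Q"
      have "\<not> a \<le> y"
      proof
        assume "a \<le> y"
        then have "y \<in> Q" using pf_up[OF Qp a] by blast
        then show False using yQ by blast
      qed
      then show "a \<in> pfx y" unfolding pfx_def by simp
    qed
  next
    show "pfx y \<subseteq> Q"
    proof
      fix a assume "a \<in> pfx y"
      then have nay: "\<not> a \<le> y" unfolding pfx_def by simp
      show "a \<in> Q"
      proof (rule ccontr)
        assume aQ: "a \<notin> Q"
        from pft_le[OF nay] obtain R where R: "prime_filter R" "a \<in> R" "y \<notin> R" by (elim exE conjE)
        have xR: "x \<notin> R" using R(1,3) pf_up[OF R(1) _ sup_ge1] unfolding y_def by blast
        have zR: "z \<notin> R" using R(1,3) pf_up[OF R(1) _ sup_ge2] unfolding y_def by blast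
        have Rx: "R \<subseteq> pfx x"
        proof
          fix r assume r: "r \<in> R"
          have "\<not> r \<le> x"
          proof
            assume "r \<le> x"
            then have "x \<in> R" using pf_up[OF R(1) r] by blast
            then show False using xR by blast
          qed
          then show "r \<in> pfx x" unfolding pfx_def by simp
        qed
        have RS: "R \<in> Spec TYPE('a)" using R(1) Spec_iff by blast
        have "R \<subseteq> Q"
        proof (rule ccontr)
          assume "\<not> R \<subseteq> Q"
          then have "R \<in> F" unfolding F_def using RS Rx by simp
          then show False using z(2) zR by blast
        qed
        then show False using R(2) aQ by blast
      qed
    qed
  qed
  have "y \<in> cmi"
    unfolding cmi_def
  proof (intro CollectI conjI allI impI)
    show "y \<noteq> top" using yQ pf_top[OF Qp] by blast
  next
    fix A m assume glb: "is_glb A m" and my: "m \<le> y"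
    show "\<exists>a\<in>A. a \<le> y"
    proof (rule ccontr)
      assume "\<not> (\<exists>a\<in>A. a \<le> y)"
      then have "\<forall>a\<in>A. a \<in> Q" using Qy unfolding pfx_def by blast
      then have "\<forall>a\<in>A. e \<le> a" using e(2) by blast
      then have "e \<le> m" using glb unfolding is_glb_def by blast
      then have "e \<le> y" using my by (rule order.trans)
      then have "y \<in> Q" using pf_up[OF Qp e(1)] by blast
      then show False using yQ by blast
    qed
  qed
  then show ?thesis using Qy by blast
qed

lemma codim_vee:
  fixes x :: "'a::{bounded_lattice,distrib_lattice}"
  assumes ch: "co_heyting TYPE('a)" and pc: "precompact TYPE('a)" and hd: "hausdorff TYPE('a)"
    and x: "x \<in> cmi"
  shows "codim (vee x) = height (pfx x)"
proof -
  have pS: "pfx x \<in> Spec TYPE('a)" using pfx_prime[OF x] Spec_iff by blast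
  have pp: "prime_filter (pfx x)" using pfx_prime[OF x] .
  obtain hx where hx: "height (pfx x) = enat hx" using pfx_fin[OF ch pc hd x] by (cases "height (pfx x)") auto
  from principal[OF ch pc hd pS hx] obtain e where e: "e \<in> pfx x" "\<forall>f\<in>pfx x. e \<le> f" by (elim bexE)
  have glb: "is_glb {y. \<not> y \<le> x} e"
    unfolding is_glb_def using e unfolding pfx_def by blast
  have "vee x = e" unfolding vee_def
  proof (rule the_equality)
    show "is_glb {y. \<not> y \<le> x} e" by (rule glb)
    fix m assume m: "is_glb {y. \<not> y \<le> x} m"
    have "m \<le> e" using m glb unfolding is_glb_def by blast
    moreover have "e \<le> m" using m glb unfolding is_glb_def by blast
    ultimately show "m = e" by (rule antisym)
  qed
  moreover have "codim e = height (pfx x)"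
  proof (rule antisym)
    show "codim e \<le> height (pfx x)" using pS e(1) by (rule codim_le_height)
    show "height (pfx x) \<le> codim e" unfolding codim_def
    proof (rule INF_greatest)
      fix p assume "p \<in> {p \<in> Spec TYPE('a). e \<in> p}"
      then have p: "p \<in> Spec TYPE('a)" "e \<in> p" by simp_all
      have "pfx x \<subseteq> p"
      proof
        fix f assume "f \<in> pfx x"
        then have "e \<le> f" using e(2) by blast
        then show "f \<in> p" using p Spec_iff pf_up by blast
      qed
      then show "height (pfx x) \<le> height p" using pS p(1) by (rule_tac height_mono) simp_all
    qed
  qed
  ultimately show ?thesis by simp
qed

lemma cofound_eq:
  fixes x :: "'a::{bounded_lattice,distrib_lattice}"
  assumes ch: "co_heyting TYPE('a)" and pc: "precompact TYPE('a)" and hd: "hausdorff TYPE('a)"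
    and x: "x \<in> cmi"
  shows "cofound_rank cmi (<) x = height (pfx x)"
proof -
  have "found_rank (pfx ` cmi) (\<subset>) (pfx x) = found_rank cmi (\<lambda>a b. b < a) x"
  proof (rule found_rank_transport)
    show "pfx ` cmi = pfx ` cmi" ..
    show "(\<lambda>a b. b < a) q p \<longleftrightarrow> pfx q \<subset> pfx p" if "p \<in> cmi" "q \<in> cmi" for p q :: 'a
      using pfx_psub_iff[of q p] by simp
    show "x \<in> cmi" by (rule x)
  qed
  also have "found_rank (pfx ` cmi) (\<subset>) (pfx x) = found_rank (Spec TYPE('a)) (\<subset>) (pfx x)"
  proof (rule found_rank_local)
    show "pfx ` cmi \<subseteq> Spec TYPE('a)" using pfx_prime Spec_iff by blast
    show "q \<in> pfx ` cmi" if "q \<in> Spec TYPE('a)" "q \<subseteq> pfx x" for q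
      using cmi_down[OF ch pc hd x that] by blast
    show "pfx x \<in> pfx ` cmi" using x by blast
  qed
  finally show ?thesis unfolding cofound_rank_def height_def by simp
qed



definition gm :: "'a::{bounded_lattice,distrib_lattice} dual set \<Rightarrow> 'a set" where
  "gm F = {a. dual a \<notin> F}"

definition hm :: "'a::{bounded_lattice,distrib_lattice} set \<Rightarrow> 'a dual set" where
  "hm P = dual ` (- P)"

lemma dual_in_hm: "dual a \<in> hm P \<longleftrightarrow> a \<notin> P"
  unfolding hm_def by auto

lemma gm_prime:
  fixes F :: "'a::{bounded_lattice,distrib_lattice} dual set"
  assumes F: "prime_filter F"
  shows "prime_filter (gm F)"
proof (rule prime_filterI)
  show "top \<in> gm F" unfolding gm_def using pf_bot[OF F] by simp
  show "bot \<notin> gm F" unfolding gm_def using pf_top[OF F] by simp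
  show "b \<in> gm F" if "a \<in> gm F" "a \<le> b" for a b :: 'a
  proof -
    have "dual b \<notin> F"
    proof
      assume "dual b \<in> F"
      moreover have "dual b \<le> dual a" using that(2) by simp
      ultimately have "dual a \<in> F" by (rule pf_up[OF F])
      then show False using that(1) unfolding gm_def by simp
    qed
    then show ?thesis unfolding gm_def by simp
  qed
  show "inf a b \<in> gm F" if "a \<in> gm F" "b \<in> gm F" for a b :: 'a
  proof -
    have "dual (inf a b) \<notin> F"
    proof
      assume "dual (inf a b) \<in> F"
      then have "sup (dual a) (dual b) \<in> F" by simp
      then have "dual a \<in> F \<or> dual b \<in> F" by (rule pf_sup[OF F])
      then show False using that unfolding gm_def by auto
    qed
    then show ?thesis unfolding gm_def by simp
  qed
  show "a \<in> gm F \<or> b \<in> gm F" if "sup a b \<in> gm F" for a b :: 'a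
  proof (rule ccontr)
    assume "\<not> (a \<in> gm F \<or> b \<in> gm F)"
    then have "dual a \<in> F" "dual b \<in> F" unfolding gm_def by simp_all
    then have "inf (dual a) (dual b) \<in> F" by (rule pf_inf[OF F])
    then have "dual (sup a b) \<in> F" by simp
    then show False using that unfolding gm_def by simp
  qed
qed

lemma hm_prime:
  fixes P :: "'a::{bounded_lattice,distrib_lattice} set"
  assumes P: "prime_filter P"
  shows "prime_filter (hm P)"
proof (rule prime_filterI)
  have "top = dual (bot::'a)" by simp
  then show "top \<in> hm P" using dual_in_hm[of bot P] pf_bot[OF P] by simp
  have "bot = dual (top::'a)" by simp
  then show "bot \<notin> hm P" using dual_in_hm[of top P] pf_top[OF P] by simp
  show "d2 \<in> hm P" if "d1 \<in> hm P" "d1 \<le> d2" for d1 d2 :: "'a dual"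
  proof -
    obtain a1 where a1: "d1 = dual a1" by (metis dual_undual)
    obtain a2 where a2: "d2 = dual a2" by (metis dual_undual)
    have "a2 \<le> a1" using that(2) a1 a2 by simp
    have "a2 \<notin> P"
    proof
      assume "a2 \<in> P"
      then have "a1 \<in> P" using \<open>a2 \<le> a1\<close> by (rule pf_up[OF P])
      then show False using that(1) a1 dual_in_hm by blast
    qed
    then show ?thesis using a2 dual_in_hm by blast
  qed
  show "inf d1 d2 \<in> hm P" if "d1 \<in> hm P" "d2 \<in> hm P" for d1 d2 :: "'a dual"
  proof -
    obtain a1 where a1: "d1 = dual a1" by (metis dual_undual)
    obtain a2 where a2: "d2 = dual a2" by (metis dual_undual)
    have n1: "a1 \<notin> P" and n2: "a2 \<notin> P" using that a1 a2 dual_in_hm by blast+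
    have "sup a1 a2 \<notin> P"
    proof
      assume "sup a1 a2 \<in> P"
      then have "a1 \<in> P \<or> a2 \<in> P" by (rule pf_sup[OF P])
      then show False using n1 n2 by blast
    qed
    then have "dual (sup a1 a2) \<in> hm P" using dual_in_hm by blast
    then show ?thesis using a1 a2 by simp
  qed
  show "d1 \<in> hm P \<or> d2 \<in> hm P" if "sup d1 d2 \<in> hm P" for d1 d2 :: "'a dual"
  proof (rule ccontr)
    assume nn: "\<not> (d1 \<in> hm P \<or> d2 \<in> hm P)"
    obtain a1 where a1: "d1 = dual a1" by (metis dual_undual)
    obtain a2 where a2: "d2 = dual a2" by (metis dual_undual)
    have p1: "a1 \<in> P" and p2: "a2 \<in> P" using nn a1 a2 dual_in_hm by blast+
    have "inf a1 a2 \<in> P" using P p1 p2 by (rule pf_inf)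
    moreover have "dual (inf a1 a2) \<in> hm P" using that a1 a2 by simp
    ultimately show False using dual_in_hm by blast
  qed
qed

lemma gm_hm: "gm (hm P) = P"
  by (rule set_eqI) (simp add: gm_def dual_in_hm)

lemma hm_gm: "hm (gm F) = F"
proof (rule set_eqI)
  fix d :: "'a dual"
  obtain a where a: "d = dual a" by (metis dual_undual)
  show "d \<in> hm (gm F) \<longleftrightarrow> d \<in> F" by (simp add: a gm_def dual_in_hm)
qed

lemma gm_sub_iff: "gm G \<subseteq> gm F \<longleftrightarrow> F \<subseteq> G"
proof
  assume h: "gm G \<subseteq> gm F"
  show "F \<subseteq> G"
  proof
    fix d assume d: "d \<in> F"
    obtain a where a: "d = dual a" by (metis dual_undual)
    show "d \<in> G"
    proof (rule ccontr)
      assume "d \<notin> G"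
      then have "a \<in> gm G" unfolding gm_def using a by simp
      then have "a \<in> gm F" using h by blast
      then show False using d a unfolding gm_def by simp
    qed
  qed
next
  assume "F \<subseteq> G" then show "gm G \<subseteq> gm F" unfolding gm_def by blast
qed

lemma gm_psub_iff: "gm G \<subset> gm F \<longleftrightarrow> F \<subset> G"
  using gm_sub_iff[of G F] gm_sub_iff[of F G] by (auto simp: less_le_not_le)

lemma coheight_gm:
  fixes F :: "'a::{bounded_lattice,distrib_lattice} dual set"
  assumes "F \<in> Spec TYPE('a dual)"
  shows "coheight F = height (gm F)"
proof -
  have "found_rank (Spec TYPE('a)) (\<subset>) (gm F) = found_rank (Spec TYPE('a dual)) (\<lambda>a b. b \<subset> a) F"
  proof (rule found_rank_transport)
    show "gm ` Spec TYPE('a dual) = Spec TYPE('a)"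
    proof
      show "gm ` Spec TYPE('a dual) \<subseteq> Spec TYPE('a)"
      proof
        fix P assume "P \<in> gm ` Spec TYPE('a dual)"
        then obtain F' where F': "F' \<in> Spec TYPE('a dual)" "P = gm F'" by (elim imageE) simp
        then have "prime_filter F'" by (simp add: Spec_iff)
        then have "prime_filter (gm F')" by (rule gm_prime)
        then show "P \<in> Spec TYPE('a)" using F'(2) by (simp add: Spec_iff)
      qed
      show "Spec TYPE('a) \<subseteq> gm ` Spec TYPE('a dual)"
      proof
        fix P :: "'a set" assume "P \<in> Spec TYPE('a)"
        then have "prime_filter P" by (simp add: Spec_iff)
        then have "prime_filter (hm P)" by (rule hm_prime)
        then have "hm P \<in> Spec TYPE('a dual)" by (simp add: Spec_iff)
        moreover have "P = gm (hm P)" by (simp add: gm_hm)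
        ultimately show "P \<in> gm ` Spec TYPE('a dual)" by (rule rev_image_eqI)
      qed
    qed
    show "(\<lambda>a b. b \<subset> a) q p \<longleftrightarrow> gm q \<subset> gm p" for p q :: "'a dual set"
      using gm_psub_iff[of q p] by simp
    show "F \<in> Spec TYPE('a dual)" by (rule assms)
  qed
  then show ?thesis unfolding coheight_def cofound_rank_def height_def by simp
qed

lemma lat_dim_eq:
  fixes x :: "'a::{bounded_lattice,distrib_lattice}"
  assumes x: "x \<in> cmi"
  shows "lat_dim (dual x) = ereal_of_enat (height (pfx x))"
proof -
  have pS: "pfx x \<in> Spec TYPE('a)" using pfx_prime[OF x] Spec_iff by blast
  define D where "D = {p \<in> Spec TYPE('a dual). dual x \<in> p}"
  have h1: "hm (pfx x) \<in> Spec TYPE('a dual)" using hm_prime[OF pfx_prime[OF x]] by (simp add: Spec_iff)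
  have h2: "dual x \<in> hm (pfx x)" by (simp add: dual_in_hm pfx_def)
  have hD: "hm (pfx x) \<in> D" unfolding D_def using h1 h2 by simp
  then have ne: "D \<noteq> {}" by blast
  have "(SUP p\<in>D. ereal_of_enat (coheight p)) = ereal_of_enat (height (pfx x))"
  proof (rule antisym)
    show "(SUP p\<in>D. ereal_of_enat (coheight p)) \<le> ereal_of_enat (height (pfx x))"
    proof (rule SUP_least)
      fix F assume "F \<in> D"
      then have F: "F \<in> Spec TYPE('a dual)" "dual x \<in> F" unfolding D_def by simp_all
      have Fp: "prime_filter F" using F(1) Spec_iff by blast
      have gS: "gm F \<in> Spec TYPE('a)" using gm_prime[OF Fp] Spec_iff by blast
      have "gm F \<subseteq> pfx x"
      proof
        fix a assume "a \<in> gm F"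
        then have aF: "dual a \<notin> F" unfolding gm_def by simp
        have "\<not> a \<le> x"
        proof
          assume "a \<le> x"
          then have "dual x \<le> dual a" by simp
          then have "dual a \<in> F" using pf_up[OF Fp F(2)] by blast
          then show False using aF by blast
        qed
        then show "a \<in> pfx x" unfolding pfx_def by simp
      qed
      then have "height (gm F) \<le> height (pfx x)" using gS pS by (rule_tac height_mono) simp_all
      then show "ereal_of_enat (coheight F) \<le> ereal_of_enat (height (pfx x))"
        using coheight_gm[OF F(1)] by simp
    qed
    have "coheight (hm (pfx x)) = height (pfx x)"
      using coheight_gm[of "hm (pfx x)"] hD gm_hm[of "pfx x"] unfolding D_def by simp
    then show "ereal_of_enat (height (pfx x)) \<le> (SUP p\<in>D. ereal_of_enat (coheight p))"
      using hD by (metis SUP_upper)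
  qed
  moreover have "lat_dim (dual x) = (SUP p\<in>D. ereal_of_enat (coheight p))"
    unfolding lat_dim_def D_def[symmetric] using ne by (rule if_not_P)
  ultimately show ?thesis by simp
qed

theorem proposition6p8:
  fixes x :: "'a::{bounded_lattice,distrib_lattice}"
  assumes "co_heyting TYPE('a)"
    and "precompact TYPE('a)"
    and "hausdorff TYPE('a)"
    and "x \<in> cmi"
  shows "lat_dim (dual x) = ereal_of_enat (cofound_rank cmi (<) x)
       \<and> cofound_rank cmi (<) x = codim (vee x)"
  using lat_dim_eq[OF assms(4)] cofound_eq[OF assms] codim_vee[OF assms] by simp


end
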